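(* Let $\lambda_1,\dots,\lambda_T\in\mathbb{R}$ and $\theta_1,\dots,\theta_T\ge 0$ with $\theta_T>0$ (in the paper $\lambda_t=\alpha_t\ell_t$ and $\theta_t=\alpha_t\rho_t$ are the weights of the mean and of the variance of $x_t$). Consider the problem $$\max_{\text{admissible }(u_0,\dots,u_{T-1})}\ \sum_{t=1}^{T}\big[\lambda_t\,\mathbb{E}(x_t)-\theta_t\,\mathrm{Var}(x_t)\big]$$ subject to $x_{t+1}=s_tx_t+P_t'u_t$, $t=0,\dots,T-1$. Define backward recursions by $p_T=\theta_T$, $q_T=\lambda_T$ and, for $t=T-1,\dots,1$, $$p_t=\theta_t+s_t^2(1-B_t)p_{t+1},\qquad q_t=\lambda_t+s_tq_{t+1}.$$ Then $p_t>0$ for all $t$. Define the deterministic sequence $\bar x_0=x_0$ and $$\bar x_{t+1}=s_t\bar x_t+\frac{q_{t+1}}{2p_{t+1}}\cdot\frac{B_t}{1-B_t},\qquad t=0,\dots,T-1.$$ Equivalently, $$\bar x_t=x_0\prod_{k=0}^{t-1}s_k+\sum_{j=0}^{t-1}\frac{q_{j+1}}{2p_{j+1}}\cdot\frac{B_j}{1-B_j}\prod_{l=j+1}^{t-1}s_l .$$ Then the feedback strategy $$u_t^*=-s_t\,(x_t-\bar x_t)\,K_t+\frac{q_{t+1}}{2p_{t+1}}\cdot\frac{K_t}{1-B_t},\qquad t=0,\dots,T-1,$$ is optimal for this problem. Moreover, under $u^*$ the following hold for every $t$: - $\mathbb{E}(x_t)=\bar x_t$; - $u_t^*-\mathbb{E}(u_t^*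 )=-s_t\big(x_t-\mathbb{E}(x_t)\big)K_t$; - $\mathbb{E}(u_t^* )=\frac{q_{t+1}}{2p_{t+1}}\cdot\frac{K_t}{1-B_t}$.
   Context: Market model. Fix integers $T\ge1$ and $n\ge1$. For $t=0,\dots,T-1$ the following are given: - a deterministic riskless gross return $s_t>1$; - a random excess-return vector $P_t\in\mathbb{R}^n$, where $P_t^i=e_t^i-s_t$ and $e_t^i$ is the gross return of risky asset $i$. The vectors $P_0,\dots,P_{T-1}$ are independent and square integrable. Write $M_t=\mathbb{E}(P_tP_t')$ and $m_t=\mathbb{E}(P_t)$, and assume $M_t$ is positive definite. Set $$B_t=m_t'M_t^{-1}m_t,\qquad K_t=M_t^{-1}m_t\in\mathbb{R}^n,$$ and assume $0<B_t<1$ for all $t$ (in the paper $B_t<1$ follows from positive definiteness of the return covariance, and $B_t>0$ holds when $m_t\ne0$). Wealth and strategies. The initial wealth $x_0\in\mathbb{R}$ is deterministic, and the wealth evolves as $x_{t+1}=s_tx_t+P_t'u_t$, where $u_t\in\mathbb{R}^n$ is the vector of amounts invested in the risky assets during period $t$. A strategy $(u_0,\dots,u_{T-1})$ is admissible if each $u_t$ is square integrable and measurable with respect to $\mathcal{F}_t=\sigma(P_0,\dots,P_{t-1})$ ($\mathcal{F}_0$ trivial); in particular $u_t$ is independent of $P_t$. Conventions: $\mathrm{Var}$ denotes variance, an empty product equals $1$, and an empty sum equals $0$. *)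

theory Defs
  imports "HOL-Probability.Probability"
begin

definition filt :: "'a measure \<Rightarrow> (nat \<Rightarrow> 'a \<Rightarrow> real^'n) \<Rightarrow> nat \<Rightarrow> 'a measure" where
  "filt M P t = sigma (space M) {P k -` A \<inter> space M | k A. k < t \<and> A \<in> sets borel}"

primrec wealth :: "real \<Rightarrow> (nat \<Rightarrow> real) \<Rightarrow> (nat \<Rightarrow> 'a \<Rightarrow> real^'n) \<Rightarrow> (nat \<Rightarrow> 'a \<Rightarrow> real^'n)
    \<Rightarrow> nat \<Rightarrow> 'a \<Rightarrow> real" where
  "wealth x0 s P u 0 = (\<lambda>\<omega>. x0)"
| "wealth x0 s P u (Suc t) = (\<lambda>\<omega>. s t * wealth x0 s P u t \<omega> + P t \<omega> \<bullet> u t \<omega>)"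

primrec fb_wealth :: "real \<Rightarrow> (nat \<Rightarrow> real) \<Rightarrow> (nat \<Rightarrow> 'a \<Rightarrow> real^'n) \<Rightarrow> (nat \<Rightarrow> real \<Rightarrow> real^'n)
    \<Rightarrow> nat \<Rightarrow> 'a \<Rightarrow> real" where
  "fb_wealth x0 s P \<phi> 0 = (\<lambda>\<omega>. x0)"
| "fb_wealth x0 s P \<phi> (Suc t) = (\<lambda>\<omega>. s t * fb_wealth x0 s P \<phi> t \<omega> + P t \<omega> \<bullet> \<phi> t (fb_wealth x0 s P \<phi> t \<omega>))"

definition admissible :: "'a measure \<Rightarrow> (nat \<Rightarrow> 'a \<Rightarrow> real^'n) \<Rightarrow> nat \<Rightarrow> (nat \<Rightarrow> 'a \<Rightarrow> real^'n) \<Rightarrow> bool" where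
  "admissible M P T u \<longleftrightarrow>
     (\<forall>t<T. u t \<in> borel_measurable (filt M P t) \<and> integrable M (\<lambda>\<omega>. (norm (u t \<omega>))\<^sup>2))"

definition objective :: "'a measure \<Rightarrow> real \<Rightarrow> (nat \<Rightarrow> real) \<Rightarrow> (nat \<Rightarrow> 'a \<Rightarrow> real^'n)
    \<Rightarrow> (nat \<Rightarrow> real) \<Rightarrow> (nat \<Rightarrow> real) \<Rightarrow> nat \<Rightarrow> (nat \<Rightarrow> 'a \<Rightarrow> real^'n) \<Rightarrow> real" where
  "objective M x0 s P lam \<theta> T u =
     (\<Sum>t=1..T. lam t * integral\<^sup>L M (wealth x0 s P u t)
        - \<theta> t * integral\<^sup>L M (\<lambda>\<omega>. (wealth x0 s P u t \<omega> - integral\<^sup>L M (wealth x0 s P u t))\<^sup>2))"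

function pcoef :: "nat \<Rightarrow> (nat \<Rightarrow> real) \<Rightarrow> (nat \<Rightarrow> real) \<Rightarrow> (nat \<Rightarrow> real) \<Rightarrow> nat \<Rightarrow> real" where
  "pcoef T \<theta> s B t = (if T \<le> t then \<theta> T else \<theta> t + (s t)\<^sup>2 * (1 - B t) * pcoef T \<theta> s B (Suc t))"
  by auto
termination by (relation "Wellfounded.measure (\<lambda>(T, _, _, _, t). T - t)") auto

function qcoef :: "nat \<Rightarrow> (nat \<Rightarrow> real) \<Rightarrow> (nat \<Rightarrow> real) \<Rightarrow> nat \<Rightarrow> real" where
  "qcoef T lam s t = (if T \<le> t then lam T else lam t + s t * qcoef T lam s (Suc t))"
  by auto
termination by (relation "Wellfounded.measure (\<lambda>(T, _, _, t). T - t)") auto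

primrec xbar :: "real \<Rightarrow> (nat \<Rightarrow> real) \<Rightarrow> (nat \<Rightarrow> real) \<Rightarrow> nat \<Rightarrow> real" where
  "xbar x0 s c 0 = x0"
| "xbar x0 s c (Suc t) = s t * xbar x0 s c t + c t"


definition meanv :: "'a measure \<Rightarrow> (nat \<Rightarrow> 'a \<Rightarrow> real^'n) \<Rightarrow> nat \<Rightarrow> real^'n" where
  "meanv M P t = integral\<^sup>L M (P t)"

definition secmom :: "'a measure \<Rightarrow> (nat \<Rightarrow> 'a \<Rightarrow> real^'n) \<Rightarrow> nat \<Rightarrow> real^'n^'n" where
  "secmom M P t = (\<chi> i j. integral\<^sup>L M (\<lambda>\<omega>. P t \<omega> $ i * P t \<omega> $ j))"

definition Bcoef :: "'a measure \<Rightarrow> (nat \<Rightarrow> 'a \<Rightarrow> real^'n) \<Rightarrow> nat \<Rightarrow> real" where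
  "Bcoef M P t = meanv M P t \<bullet> (matrix_inv (secmom M P t) *v meanv M P t)"

definition Kvec :: "'a measure \<Rightarrow> (nat \<Rightarrow> 'a \<Rightarrow> real^'n) \<Rightarrow> nat \<Rightarrow> real^'n" where
  "Kvec M P t = matrix_inv (secmom M P t) *v meanv M P t"


definition ustar_xbar :: "'a measure \<Rightarrow> (nat \<Rightarrow> 'a \<Rightarrow> real^'n) \<Rightarrow> real \<Rightarrow> (nat \<Rightarrow> real)
    \<Rightarrow> (nat \<Rightarrow> real) \<Rightarrow> (nat \<Rightarrow> real) \<Rightarrow> nat \<Rightarrow> nat \<Rightarrow> real" where
  "ustar_xbar M P x0 s lam \<theta> T =
     xbar x0 s (\<lambda>t. qcoef T lam s (Suc t) / (2 * pcoef T \<theta> s (Bcoef M P) (Suc t))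
                     * (Bcoef M P t / (1 - Bcoef M P t)))"

definition ustar_rule :: "'a measure \<Rightarrow> (nat \<Rightarrow> 'a \<Rightarrow> real^'n) \<Rightarrow> real \<Rightarrow> (nat \<Rightarrow> real)
    \<Rightarrow> (nat \<Rightarrow> real) \<Rightarrow> (nat \<Rightarrow> real) \<Rightarrow> nat \<Rightarrow> nat \<Rightarrow> real \<Rightarrow> real^'n" where
  "ustar_rule M P x0 s lam \<theta> T t xt =
     (- (s t * (xt - ustar_xbar M P x0 s lam \<theta> T t))) *\<^sub>R Kvec M P t
     + (qcoef T lam s (Suc t) / (2 * pcoef T \<theta> s (Bcoef M P) (Suc t)) / (1 - Bcoef M P t))
         *\<^sub>R Kvec M P t"

definition ustar_strategy :: "'a measure \<Rightarrow> (nat \<Rightarrow> 'a \<Rightarrow> real^'n) \<Rightarrow> real \<Rightarrow> (nat \<Rightarrow> real)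
    \<Rightarrow> (nat \<Rightarrow> real) \<Rightarrow> (nat \<Rightarrow> real) \<Rightarrow> nat \<Rightarrow> nat \<Rightarrow> 'a \<Rightarrow> real^'n" where
  "ustar_strategy M P x0 s lam \<theta> T t \<omega> =
     ustar_rule M P x0 s lam \<theta> T t (fb_wealth x0 s P (ustar_rule M P x0 s lam \<theta> T) t \<omega>)"

end

theory Submission
  imports Defs
begin

declare pcoef.simps[simp del] qcoef.simps[simp del]


lemma inv_right:
  fixes A :: "real^'n^'n"
  assumes "invertible A" shows "A ** matrix_inv A = mat 1"
proof -
  have "\<exists>A'. A ** A' = mat 1 \<and> A' ** A = mat 1" using assms unfolding invertible_def by blast
  then show ?thesis unfolding matrix_inv_def by (rule someI2_ex) blast
qed

lemma pd_invertible:
  fixes A :: "real^'n^'n"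
  assumes pd: "\<forall>v. v \<noteq> 0 \<longrightarrow> v \<bullet> (A *v v) > 0"
  shows "invertible A"
proof -
  have "\<forall>x. A *v x = 0 \<longrightarrow> x = 0"
  proof (intro allI impI)
    fix x assume "A *v x = 0"
    then have "x \<bullet> (A *v x) = 0" by simp
    then show "x = 0" using pd by (metis less_irrefl)
  qed
  then show ?thesis unfolding invertible_left_inverse matrix_left_invertible_ker .
qed

lemma sym_form:
  fixes A :: "real^'n^'n"
  assumes "transpose A = A"
  shows "x \<bullet> (A *v y) = y \<bullet> (A *v x)"
proof -
  have "x \<bullet> (A *v y) = (x v* A) \<bullet> y" by (simp add: dot_lmul_matrix)
  also have "x v* A = A *v x" using vector_transpose_matrix[of x A] assms by simp
  finally show ?thesis by (simp add: inner_commute)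
qed

lemma quad_expand:
  fixes A :: "real^'n^'n"
  assumes "transpose A = A"
  shows "(u + c *\<^sub>R K) \<bullet> (A *v (u + c *\<^sub>R K))
     = u \<bullet> (A *v u) + 2 * c * (K \<bullet> (A *v u)) + c\<^sup>2 * (K \<bullet> (A *v K))"
proof -
  have "(u + c *\<^sub>R K) \<bullet> (A *v (u + c *\<^sub>R K))
     = u \<bullet> (A *v u) + c * (u \<bullet> (A *v K)) + (c * (K \<bullet> (A *v u)) + c * (c * (K \<bullet> (A *v K))))"
    by (simp only: matrix_vector_right_distrib matrix_vector_mult_scaleR inner_add_left inner_add_right
        inner_scaleR_left inner_scaleR_right) (simp add: algebra_simps)
  also have "u \<bullet> (A *v K) = K \<bullet> (A *v u)" using sym_form[OF assms] .
  finally show ?thesis by (simp add: power2_eq_square)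
qed

lemma quad_cs:
  fixes A :: "real^'n^'n"
  assumes sym: "transpose A = A" and psd: "\<forall>v. 0 \<le> v \<bullet> (A *v v)"
    and AK: "A *v K = m" and B: "m \<bullet> K > 0"
  shows "(m \<bullet> a)\<^sup>2 \<le> (m \<bullet> K) * (a \<bullet> (A *v a))"
proof -
  define B where "B = m \<bullet> K"
  define y where "y = m \<bullet> a"
  define Q where "Q = a \<bullet> (A *v a)"
  have "0 \<le> (a + (- y / B) *\<^sub>R K) \<bullet> (A *v (a + (- y / B) *\<^sub>R K))" using psd by blast
  also have "\<dots> = Q + 2 * (- y / B) * (K \<bullet> (A *v a)) + (- y / B)\<^sup>2 * (K \<bullet> (A *v K))"
    unfolding Q_def by (rule quad_expand[OF sym])
  also have "K \<bullet> (A *v a) = y" using sym_form[OF sym, of K a] AK by (simp add: y_def inner_commute)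
  also have "K \<bullet> (A *v K) = B" using AK by (simp add: B_def inner_commute)
  finally have "0 \<le> Q + 2 * (- y / B) * y + (- y / B)\<^sup>2 * B" .
  then have "0 \<le> B * (Q + 2 * (- y / B) * y + (- y / B)\<^sup>2 * B)" using B B_def by simp
  also have "\<dots> = B * Q - y\<^sup>2" using B B_def by (simp add: field_simps power2_eq_square)
  finally show ?thesis by (simp add: y_def Q_def B_def)
qed

lemma opt_scalar:
  fixes p q B y Q :: real
  assumes p: "p > 0" and B: "0 < B" "B < 1" and cs: "y\<^sup>2 \<le> B * Q"
  shows "q * y - p * (Q - y\<^sup>2) \<le> p * (q / (2 * p))\<^sup>2 * B / (1 - B)"
proof -
  define c where "c = q / (2 * p)"
  have q: "q = 2 * p * c" using p by (simp add: c_def)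
  have Q: "Q \<ge> y\<^sup>2 / B" using cs B by (simp add: field_simps)
  have "q * y - p * (Q - y\<^sup>2) \<le> q * y - p * (y\<^sup>2 / B - y\<^sup>2)"
    using Q p by (simp add: mult_left_mono)
  also have "\<dots> = p * (2 * c * y - y\<^sup>2 * (1 - B) / B)" using B by (simp add: q field_simps)
  also have "\<dots> \<le> p * (c\<^sup>2 * B / (1 - B))"
  proof -
    have "0 \<le> (c * B - y * (1 - B))\<^sup>2 / (B * (1 - B))" using B by simp
    also have "\<dots> = c\<^sup>2 * B / (1 - B) - (2 * c * y - y\<^sup>2 * (1 - B) / B)"
      using B by (simp add: field_simps power2_eq_square)
    finally have h: "2 * c * y - y\<^sup>2 * (1 - B) / B \<le> c\<^sup>2 * B / (1 - B)" by simp
    show ?thesis by (rule mult_left_mono[OF h]) (use p in simp)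
  qed
  finally show ?thesis by (simp add: c_def)
qed

lemma opt_value:
  fixes A :: "real^'n^'n" and q p :: real
  assumes sym: "transpose A = A" and AK: "A *v K = m" and p: "p > 0" and B: "m \<bullet> K < 1"
  defines "a \<equiv> (q / (2 * p) / (1 - m \<bullet> K)) *\<^sub>R K"
  shows "q * (m \<bullet> a) - p * (a \<bullet> (A *v a) - (m \<bullet> a)\<^sup>2) = p * (q / (2 * p))\<^sup>2 * (m \<bullet> K) / (1 - m \<bullet> K)"
proof -
  define B where "B = m \<bullet> K"
  define c where "c = q / (2 * p)"
  have q: "q = 2 * p * c" using p by (simp add: c_def)
  have ma: "m \<bullet> a = c / (1 - B) * B" by (simp add: a_def c_def B_def)
  have aa: "a \<bullet> (A *v a) = (c / (1 - B))\<^sup>2 * B"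
    by (simp add: a_def c_def B_def matrix_vector_mult_scaleR AK power2_eq_square inner_commute)
  define r where "r = c / (1 - B)"
  have B1: "1 - B > 0" using B B_def by simp
  have cr: "c = r * (1 - B)" using B1 by (simp add: r_def)
  have ma': "m \<bullet> a = r * B" using ma by (simp add: r_def)
  have aa': "a \<bullet> (A *v a) = r\<^sup>2 * B" using aa by (simp add: r_def)
  have rhs: "p * c\<^sup>2 * B / (1 - B) = p * r\<^sup>2 * (1 - B) * B"
    using B1 by (simp add: cr power2_eq_square field_simps)
  have "q * (m \<bullet> a) - p * (a \<bullet> (A *v a) - (m \<bullet> a)\<^sup>2) = p * r\<^sup>2 * (1 - B) * B"
    unfolding ma' aa' q cr by (simp add: power2_eq_square algebra_simps)
  then show ?thesis using rhs by (simp add: B_def c_def)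
qed


declare pcoef.simps[simp del] qcoef.simps[simp del]

lemma pcoef_step: "t < T \<Longrightarrow> pcoef T \<theta> s B t = \<theta> t + (s t)\<^sup>2 * (1 - B t) * pcoef T \<theta> s B (Suc t)"
  by (subst pcoef.simps) simp

lemma pcoef_T: "T \<le> t \<Longrightarrow> pcoef T \<theta> s B t = \<theta> T"
  by (subst pcoef.simps) simp

lemma qcoef_step: "t < T \<Longrightarrow> qcoef T lam s t = lam t + s t * qcoef T lam s (Suc t)"
  by (subst qcoef.simps) simp

lemma qcoef_T: "T \<le> t \<Longrightarrow> qcoef T lam s t = lam T"
  by (subst qcoef.simps) simp

lemma pcoef_pos:
  assumes th: "\<forall>t\<in>{1..T}. \<theta> t \<ge> 0" and thT: "\<theta> T > 0" and B: "\<forall>t<T. B t < 1"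
    and s: "\<forall>t<T. s t > 1" and t: "1 \<le> t"
  shows "pcoef T \<theta> s B t > 0"
proof (cases "t \<le> T")
  case False then show ?thesis using thT by (simp add: pcoef_T)
next
  case True
  then show ?thesis using t
  proof (induction t rule: inc_induct)
    case base then show ?case using thT by (simp add: pcoef_T)
  next
    case (step n)
    have th0: "0 \<le> \<theta> n" using th step by auto
    have pS: "0 < pcoef T \<theta> s B (Suc n)" using step by simp
    have "s n > 1" using s step by simp
    then have "0 < (s n)\<^sup>2" by simp
    moreover have "0 < 1 - B n" using B step by simp
    ultimately have "0 < (s n)\<^sup>2 * (1 - B n)" by (rule mult_pos_pos)
    then have "0 < (s n)\<^sup>2 * (1 - B n) * pcoef T \<theta> s B (Suc n)" using pS by (rule mult_pos_pos)
    moreover have "pcoef T \<theta> s B n = \<theta> n + (s n)\<^sup>2 * (1 - B n) * pcoef T \<theta> s B (Suc n)"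
      using step by (intro pcoef_step) simp
    ultimately show ?case using th0 by linarith
  qed
qed

lemma xbar_formula:
  "xbar x0 s c t = x0 * (\<Prod>k<t. s k) + (\<Sum>j<t. c j * (\<Prod>l\<in>{Suc j..<t}. s l))"
proof (induction t)
  case 0 then show ?case by simp
next
  case (Suc t)
  have "(\<Sum>j<Suc t. c j * (\<Prod>l\<in>{Suc j..<Suc t}. s l))
     = (\<Sum>j<t. c j * (\<Prod>l\<in>{Suc j..<t}. s l) * s t) + c t"
  proof -
    have "(\<Sum>j<t. c j * (\<Prod>l\<in>{Suc j..<Suc t}. s l)) = (\<Sum>j<t. c j * (\<Prod>l\<in>{Suc j..<t}. s l) * s t)"
      by (rule sum.cong) (auto simp: prod.atLeastLessThan_Suc)
    then show ?thesis by simp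
  qed
  then show ?case using Suc by (simp add: sum_distrib_left sum_distrib_right algebra_simps)
qed

lemma telescope:
  fixes \<mu> V L h :: "nat \<Rightarrow> real"
  assumes T: "T \<ge> 1"
    and mu: "\<forall>t<T. \<mu> (Suc t) = s t * \<mu> t + L t"
    and V: "\<forall>t<T. V (Suc t) = (s t)\<^sup>2 * (1 - B t) * V t + h t"
    and V0: "V 0 = 0" and mu0: "\<mu> 0 = x0"
  shows "(\<Sum>t=1..T. lam t * \<mu> t - \<theta> t * V t)
    = qcoef T lam s 1 * s 0 * x0 + (\<Sum>t<T. qcoef T lam s (Suc t) * L t - pcoef T \<theta> s B (Suc t) * h t)"
proof -
  define g where "g t = qcoef T lam s (Suc t) * L t - pcoef T \<theta> s B (Suc t) * h t" for t
  define f where "f t = lam t * \<mu> t - \<theta> t * V t" for t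
  have claim: "(\<Sum>t=k..T. f t) = qcoef T lam s k * \<mu> k - pcoef T \<theta> s B k * V k + (\<Sum>t\<in>{k..<T}. g t)"
    if "k \<le> T" for k
    using that
  proof (induction k rule: inc_induct)
    case base then show ?case by (simp add: f_def pcoef_T qcoef_T)
  next
    case (step n)
    define G where "G = (\<Sum>t\<in>{Suc n..<T}. g t)"
    have A: "(\<Sum>t=n..T. f t) = f n + (\<Sum>t=Suc n..T. f t)" using step by (simp add: sum.atLeast_Suc_atMost)
    have Bq: "(\<Sum>t\<in>{n..<T}. g t) = g n + G"
      using step by (simp add: sum.atLeast_Suc_lessThan G_def)
    have IH: "(\<Sum>t=Suc n..T. f t) = qcoef T lam s (Suc n) * \<mu> (Suc n) - pcoef T \<theta> s B (Suc n) * V (Suc n) + G"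
      using step.IH by (simp add: G_def)
    have mu': "\<mu> (Suc n) = s n * \<mu> n + L n" and V': "V (Suc n) = (s n)\<^sup>2 * (1 - B n) * V n + h n"
      using mu V step by auto
    have qn: "qcoef T lam s n = lam n + s n * qcoef T lam s (Suc n)" using step by (simp add: qcoef_step)
    have pn: "pcoef T \<theta> s B n = \<theta> n + (s n)\<^sup>2 * (1 - B n) * pcoef T \<theta> s B (Suc n)"
      using step by (simp add: pcoef_step)
    show ?case unfolding A Bq IH unfolding qn pn mu' V' f_def g_def by (simp add: algebra_simps)
  qed
  have "(\<Sum>t=1..T. f t) = qcoef T lam s 1 * \<mu> 1 - pcoef T \<theta> s B 1 * V 1 + (\<Sum>t\<in>{1..<T}. g t)"
    using claim T by simp
  also have "\<mu> 1 = s 0 * x0 + L 0" using mu T mu0 by auto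
  also have "V 1 = h 0" using V T V0 by auto
  also have "(\<Sum>t<T. g t) = g 0 + (\<Sum>t\<in>{1..<T}. g t)"
    using T by (simp add: lessThan_atLeast0 sum.atLeast_Suc_lessThan)
  ultimately show ?thesis by (simp add: f_def g_def algebra_simps)
qed


locale mv = prob_space M for M :: "'a measure" +
  fixes P :: "nat \<Rightarrow> 'a \<Rightarrow> real^'n" and T :: nat
  assumes Pmeas: "\<And>t. t<T \<Longrightarrow> P t \<in> borel_measurable M"
    and indep: "indep_vars (\<lambda>_. borel) P {..<T}"
    and Psq: "\<And>t. t<T \<Longrightarrow> integrable M (\<lambda>\<omega>. (norm (P t \<omega>))\<^sup>2)"
begin

abbreviation "F t \<equiv> filt M P t"

lemma gen_sub: "{P k -` A \<inter> space M | k A. k < t \<and> A \<in> sets borel} \<subseteq> Pow (space M)"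
  by auto

lemma space_F[simp]: "space (F t) = space M"
  unfolding filt_def by (simp add: space_measure_of_conv)

lemma sets_F: "sets (F t) = sigma_sets (space M) {P k -` A \<inter> space M | k A. k < t \<and> A \<in> sets borel}"
  unfolding filt_def by (rule sets_measure_of[OF gen_sub])

lemma sets_F_sub: "t \<le> T \<Longrightarrow> sets (F t) \<subseteq> sets M"
  unfolding sets_F
  by (rule sets.sigma_sets_subset) (auto intro!: measurable_sets Pmeas)

lemma sets_F_mono: "t \<le> t' \<Longrightarrow> sets (F t) \<subseteq> sets (F t')"
  unfolding sets_F
  by (rule sigma_sets_mono') (auto, blast intro: less_le_trans)

lemma subalg_F: "t \<le> T \<Longrightarrow> subalgebra M (F t)"
  using sets_F_sub unfolding subalgebra_def by auto

lemma meas_F_M: "t \<le> T \<Longrightarrow> f \<in> borel_measurable (F t) \<Longrightarrow> f \<in> borel_measurable M"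
  using subalg_F measurable_from_subalg by blast

lemma meas_F_mono: "t \<le> t' \<Longrightarrow> f \<in> borel_measurable (F t) \<Longrightarrow> f \<in> borel_measurable (F t')"
  using sets_F_mono unfolding measurable_def by auto

lemma P_meas_F: "k < t \<Longrightarrow> P k \<in> borel_measurable (F t)"
  unfolding measurable_def by (auto simp: sets_F intro!: sigma_sets.Basic)


lemma Int_stable_pre: "Int_stable {P i -` A \<inter> space M | A. A \<in> sets borel}"
  apply (auto simp: Int_stable_def)
  apply (rule_tac x="A \<inter> Aa" in exI)
  apply auto
  done

lemma indep_F_P:
  assumes "t < T"
  shows "indep_set (sets (F t)) (sigma_sets (space M) {P t -` A \<inter> space M | A. A \<in> sets borel})"
proof -
  define E where "E i = {P i -` A \<inter> space M | A. A \<in> sets borel}" for i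
  have "indep_sets E {..<T}" using indep unfolding indep_vars_def2 E_def by auto
  then have "indep_sets E (\<Union>j\<in>UNIV. case_bool {..<t} {t} j)"
    by (rule indep_sets_mono_index[rotated]) (use assms in \<open>auto split: bool.splits\<close>)
  then have "indep_sets (\<lambda>j. sigma_sets (space M) (\<Union>i\<in>case_bool {..<t} {t} j. E i)) UNIV"
    by (rule indep_sets_collect_sigma)
       (auto simp: E_def Int_stable_pre disjoint_family_on_def split: bool.splits)
  then show ?thesis unfolding indep_set_def
  proof (rule indep_sets_mono_sets)
    fix j :: bool
    show "case_bool (sets (F t)) (sigma_sets (space M) {P t -` A \<inter> space M | A. A \<in> sets borel}) j
      \<subseteq> sigma_sets (space M) (\<Union>i\<in>case_bool {..<t} {t} j. E i)"
    proof (cases j)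
      case True
      have "(\<Union>i\<in>{..<t}. E i) = {P k -` A \<inter> space M | k A. k < t \<and> A \<in> sets borel}"
        by (auto simp: E_def)
      then show ?thesis using True by (simp add: sets_F)
    next
      case False
      then show ?thesis by (simp add: E_def)
    qed
  qed
qed

lemma indep_var_FP:
  fixes X :: "'a \<Rightarrow> real" and g :: "real^'n \<Rightarrow> real"
  assumes t: "t < T" and X: "X \<in> borel_measurable (F t)" and g: "g \<in> borel_measurable borel"
  shows "indep_var borel X borel (\<lambda>\<omega>. g (P t \<omega>))"
  unfolding indep_var_eq
proof (intro conjI)
  show "random_variable borel X" using meas_F_M[OF _ X] t by simp
  show "random_variable borel (\<lambda>\<omega>. g (P t \<omega>))" using Pmeas[OF t] g by measurable
  have "indep_sets (case_bool (sets (F t)) (sigma_sets (space M) {P t -` A \<inter> space M | A. A \<in> sets borel})) UNIV"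
    using indep_F_P[OF t] unfolding indep_set_def .
  then show "indep_set (sigma_sets (space M) {X -` A \<inter> space M |A. A \<in> sets borel})
     (sigma_sets (space M) {(\<lambda>\<omega>. g (P t \<omega>)) -` A \<inter> space M |A. A \<in> sets borel})"
    unfolding indep_set_def
  proof (rule indep_sets_mono_sets)
    fix j :: bool
    show "case_bool (sigma_sets (space M) {X -` A \<inter> space M |A. A \<in> sets borel})
     (sigma_sets (space M) {(\<lambda>\<omega>. g (P t \<omega>)) -` A \<inter> space M |A. A \<in> sets borel}) j
      \<subseteq> case_bool (sets (F t)) (sigma_sets (space M) {P t -` A \<inter> space M | A. A \<in> sets borel}) j"
    proof (cases j)
      case True
      have "sigma_sets (space (F t)) {X -` A \<inter> space (F t) |A. A \<in> sets borel} \<subseteq> sets (F t)"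
        by (rule sets.sigma_sets_subset) (use X measurable_sets[OF X] in \<open>auto\<close>)
      then show ?thesis using True by simp
    next
      case False
      have "sigma_sets (space M) {(\<lambda>\<omega>. g (P t \<omega>)) -` A \<inter> space M |A. A \<in> sets borel}
         \<subseteq> sigma_sets (space M) {P t -` A \<inter> space M | A. A \<in> sets borel}"
      proof (rule sigma_sets_mono')
        show "{(\<lambda>\<omega>. g (P t \<omega>)) -` A \<inter> space M |A. A \<in> sets borel}
          \<subseteq> {P t -` A \<inter> space M | A. A \<in> sets borel}"
        proof safe
          fix A :: "real set" assume "A \<in> sets borel"
          then have "g -` A \<in> sets borel" using g measurable_sets[of g borel borel A] by simp
          moreover have "(\<lambda>\<omega>. g (P t \<omega>)) -` A \<inter> space M = P t -` (g -` A) \<inter> space M" by auto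
          ultimately show "\<exists>B. (\<lambda>\<omega>. g (P t \<omega>)) -` A \<inter> space M = P t -` B \<inter> space M \<and> B \<in> sets borel"
            by blast
        qed
      qed
      then show ?thesis using False by simp
    qed
  qed
qed

lemma indep_mult:
  fixes X :: "'a \<Rightarrow> real" and g :: "real^'n \<Rightarrow> real"
  assumes t: "t < T" and X: "X \<in> borel_measurable (F t)" and g: "g \<in> borel_measurable borel"
    and iX: "integrable M X" and ig: "integrable M (\<lambda>\<omega>. g (P t \<omega>))"
  shows "integrable M (\<lambda>\<omega>. X \<omega> * g (P t \<omega>))"
    and "(\<integral>\<omega>. X \<omega> * g (P t \<omega>) \<partial>M) = (\<integral>\<omega>. X \<omega> \<partial>M) * (\<integral>\<omega>. g (P t \<omega>) \<partial>M)"
  using indep_var_integrable[OF indep_var_FP[OF t X g] iX ig]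
    indep_var_lebesgue_integral[OF indep_var_FP[OF t X g] iX ig] by auto

end


lemma abs_prod_le: "\<bar>a * b\<bar> \<le> a\<^sup>2 + (b::real)\<^sup>2"
proof -
  have "0 \<le> (\<bar>a\<bar> - \<bar>b\<bar>)\<^sup>2" by simp
  then have "2 * \<bar>a\<bar> * \<bar>b\<bar> \<le> a\<^sup>2 + b\<^sup>2" by (simp add: power2_eq_square algebra_simps)
  moreover have "0 \<le> \<bar>a\<bar> * \<bar>b\<bar>" by simp
  ultimately show ?thesis unfolding abs_mult by linarith
qed

lemma nth_meas[measurable (raw)]:
  "f \<in> borel_measurable N \<Longrightarrow> (\<lambda>x. (f x :: real^'n) $ i) \<in> borel_measurable N"
  using measurable_compose[OF _ borel_measurable_nth] by blast

lemma sq_sum_le: "(a + b)\<^sup>2 \<le> 2 * a\<^sup>2 + 2 * (b::real)\<^sup>2"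
proof -
  have "0 \<le> (a - b)\<^sup>2" by simp
  then show ?thesis by (simp add: power2_eq_square algebra_simps)
qed

context mv begin

lemma L2_mult:
  fixes f g :: "'a \<Rightarrow> real"
  assumes [measurable]: "f \<in> borel_measurable M" "g \<in> borel_measurable M"
    and "integrable M (\<lambda>\<omega>. (f \<omega>)\<^sup>2)" "integrable M (\<lambda>\<omega>. (g \<omega>)\<^sup>2)"
  shows "integrable M (\<lambda>\<omega>. f \<omega> * g \<omega>)"
  by (rule Bochner_Integration.integrable_bound[where f="\<lambda>\<omega>. (f \<omega>)\<^sup>2 + (g \<omega>)\<^sup>2"])
     (use assms in \<open>auto simp: abs_prod_le\<close>)

lemma L2_add:
  fixes f g :: "'a \<Rightarrow> real"
  assumes [measurable]: "f \<in> borel_measurable M" "g \<in> borel_measurable M"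
    and "integrable M (\<lambda>\<omega>. (f \<omega>)\<^sup>2)" "integrable M (\<lambda>\<omega>. (g \<omega>)\<^sup>2)"
  shows "integrable M (\<lambda>\<omega>. (f \<omega> + g \<omega>)\<^sup>2)"
  by (rule Bochner_Integration.integrable_bound[where f="\<lambda>\<omega>. 2 * (f \<omega>)\<^sup>2 + 2 * (g \<omega>)\<^sup>2"])
     (use assms in \<open>auto simp: sq_sum_le\<close>)

lemma L2_L1:
  fixes f :: "'a \<Rightarrow> real"
  assumes "f \<in> borel_measurable M" "integrable M (\<lambda>\<omega>. (f \<omega>)\<^sup>2)"
  shows "integrable M f"
  by (rule square_integrable_imp_integrable[OF assms])

lemma comp_L2:
  fixes u :: "'a \<Rightarrow> real^'n"
  assumes [measurable]: "u \<in> borel_measurable M" and "integrable M (\<lambda>\<omega>. (norm (u \<omega>))\<^sup>2)"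
  shows "integrable M (\<lambda>\<omega>. (u \<omega> $ i)\<^sup>2)"
proof (rule Bochner_Integration.integrable_bound[where f="\<lambda>\<omega>. (norm (u \<omega>))\<^sup>2"])
  show "AE \<omega> in M. norm ((u \<omega> $ i)\<^sup>2) \<le> norm ((norm (u \<omega>))\<^sup>2)"
  proof
    fix \<omega>
    have "\<bar>u \<omega> $ i\<bar> \<le> norm (u \<omega>)" by (rule component_le_norm_cart)
    then have "\<bar>u \<omega> $ i\<bar>\<^sup>2 \<le> (norm (u \<omega>))\<^sup>2" by (rule power_mono) simp
    then show "norm ((u \<omega> $ i)\<^sup>2) \<le> norm ((norm (u \<omega>))\<^sup>2)" by simp
  qed
qed (use assms in auto)

lemma vec_integrable:
  fixes u :: "'a \<Rightarrow> real^'n"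
  assumes [measurable]: "u \<in> borel_measurable M" and "integrable M (\<lambda>\<omega>. (norm (u \<omega>))\<^sup>2)"
  shows "integrable M u"
proof -
  have "integrable M (\<lambda>\<omega>. norm (u \<omega>))" by (rule L2_L1) (use assms in auto)
  then show ?thesis using integrable_norm_iff[of u M] by simp
qed

lemma integral_nth:
  fixes u :: "'a \<Rightarrow> real^'n"
  assumes "integrable M u"
  shows "(integral\<^sup>L M u) $ i = (\<integral>\<omega>. u \<omega> $ i \<partial>M)"
  using integral_bounded_linear[OF bounded_linear_vec_nth assms, of i] by simp

definition good :: "(nat \<Rightarrow> 'a \<Rightarrow> real^'n) \<Rightarrow> nat \<Rightarrow> bool" where
  "good v t \<longleftrightarrow> (\<forall>k<t. v k \<in> borel_measurable (F k) \<and> integrable M (\<lambda>\<omega>. (norm (v k \<omega>))\<^sup>2))"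

lemma good_mono: "good v (Suc t) \<Longrightarrow> good v t"
  unfolding good_def by auto

lemma wealth_meas:
  assumes "t \<le> T" "good v t"
  shows "wealth x0 s P v t \<in> borel_measurable (F t)"
  using assms
proof (induction t)
  case 0 then show ?case by simp
next
  case (Suc t)
  have [measurable]: "wealth x0 s P v t \<in> borel_measurable (F (Suc t))"
    using Suc good_mono meas_F_mono[of t "Suc t"] by auto
  have [measurable]: "P t \<in> borel_measurable (F (Suc t))" by (rule P_meas_F) simp
  have [measurable]: "v t \<in> borel_measurable (F (Suc t))"
    using Suc meas_F_mono[of t "Suc t"] unfolding good_def by auto
  show ?case by simp
qed

end

context mv begin

lemma good_facts:
  assumes "good v (Suc t)" "t < T"
  shows "v t \<in> borel_measurable (F t)" "v t \<in> borel_measurable M"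
    "integrable M (\<lambda>\<omega>. (norm (v t \<omega>))\<^sup>2)"
  using assms meas_F_M[of t "v t"] unfolding good_def by auto

lemma wealth_sq:
  assumes "t \<le> T" "good v t"
  shows "integrable M (\<lambda>\<omega>. (wealth x0 s P v t \<omega>)\<^sup>2)"
  using assms
proof (induction t)
  case 0 then show ?case by simp
next
  case (Suc t)
  then have t: "t < T" by simp
  note gf = good_facts[OF Suc(3) t]
  have xF[measurable]: "wealth x0 s P v t \<in> borel_measurable (F t)"
    using wealth_meas Suc good_mono by auto
  have xM[measurable]: "wealth x0 s P v t \<in> borel_measurable M" using meas_F_M[OF _ xF] t by simp
  have PM[measurable]: "P t \<in> borel_measurable M" using Pmeas t by simp
  have uF[measurable]: "v t \<in> borel_measurable (F t)" and uM[measurable]: "v t \<in> borel_measurable M"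
    using gf by auto
  have i1: "integrable M (\<lambda>\<omega>. (s t * wealth x0 s P v t \<omega>)\<^sup>2)"
    using Suc good_mono by (simp add: power_mult_distrib)
  have prod: "integrable M (\<lambda>\<omega>. (norm (v t \<omega>))\<^sup>2 * (norm (P t \<omega>))\<^sup>2)"
    using indep_mult(1)[OF t, of "\<lambda>\<omega>. (norm (v t \<omega>))\<^sup>2" "\<lambda>p. (norm p)\<^sup>2"] gf Psq[OF t] by simp
  have i2: "integrable M (\<lambda>\<omega>. (P t \<omega> \<bullet> v t \<omega>)\<^sup>2)"
  proof (rule Bochner_Integration.integrable_bound[OF prod])
    show "AE \<omega> in M. norm ((P t \<omega> \<bullet> v t \<omega>)\<^sup>2) \<le> norm ((norm (v t \<omega>))\<^sup>2 * (norm (P t \<omega>))\<^sup>2)"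
    proof
      fix \<omega>
      have "\<bar>P t \<omega> \<bullet> v t \<omega>\<bar> \<le> norm (P t \<omega>) * norm (v t \<omega>)" by (rule Cauchy_Schwarz_ineq2)
      then have "\<bar>P t \<omega> \<bullet> v t \<omega>\<bar>\<^sup>2 \<le> (norm (P t \<omega>) * norm (v t \<omega>))\<^sup>2" by (rule power_mono) simp
      then show "norm ((P t \<omega> \<bullet> v t \<omega>)\<^sup>2) \<le> norm ((norm (v t \<omega>))\<^sup>2 * (norm (P t \<omega>))\<^sup>2)"
        by (simp add: power_mult_distrib mult.commute)
    qed
  qed measurable
  show ?case using L2_add[OF _ _ i1 i2] by simp
qed

lemma P_facts:
  assumes t: "t < T"
  shows "P t \<in> borel_measurable M" "integrable M (\<lambda>\<omega>. (P t \<omega> $ i)\<^sup>2)"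
    "integrable M (\<lambda>\<omega>. P t \<omega> $ i)" "integrable M (P t)"
    "meanv M P t $ i = (\<integral>\<omega>. P t \<omega> $ i \<partial>M)"
proof -
  show PM: "P t \<in> borel_measurable M" using Pmeas t by simp
  show sq: "integrable M (\<lambda>\<omega>. (P t \<omega> $ i)\<^sup>2)" using comp_L2[OF PM Psq[OF t]] .
  show "integrable M (\<lambda>\<omega>. P t \<omega> $ i)" by (rule L2_L1[OF _ sq]) (use PM in measurable)
  show iP: "integrable M (P t)" using vec_integrable[OF PM Psq[OF t]] .
  show "meanv M P t $ i = (\<integral>\<omega>. P t \<omega> $ i \<partial>M)" unfolding meanv_def using integral_nth[OF iP] .
qed

lemma Pdot:
  fixes w :: "'a \<Rightarrow> real^'n"
  assumes t: "t < T" and wF: "w \<in> borel_measurable (F t)" and wi: "\<And>i. integrable M (\<lambda>\<omega>. w \<omega> $ i)"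
  shows "integrable M (\<lambda>\<omega>. P t \<omega> \<bullet> w \<omega>)"
    "(\<integral>\<omega>. P t \<omega> \<bullet> w \<omega> \<partial>M) = (\<Sum>i\<in>UNIV. (\<integral>\<omega>. w \<omega> $ i \<partial>M) * meanv M P t $ i)"
proof -
  have eq: "(\<lambda>\<omega>. P t \<omega> \<bullet> w \<omega>) = (\<lambda>\<omega>. \<Sum>i\<in>UNIV. w \<omega> $ i * (P t \<omega> $ i))"
    by (simp add: inner_vec_def mult.commute)
  have wiF: "(\<lambda>\<omega>. w \<omega> $ i) \<in> borel_measurable (F t)" for i using wF by measurable
  note im = indep_mult[OF t wiF borel_measurable_nth wi P_facts(3)[OF t]]
  show "integrable M (\<lambda>\<omega>. P t \<omega> \<bullet> w \<omega>)" unfolding eq using im(1) by auto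
  show "(\<integral>\<omega>. P t \<omega> \<bullet> w \<omega> \<partial>M) = (\<Sum>i\<in>UNIV. (\<integral>\<omega>. w \<omega> $ i \<partial>M) * meanv M P t $ i)"
    unfolding eq using im by (simp add: Bochner_Integration.integral_sum P_facts(5)[OF t])
qed

lemma Pdot2:
  fixes w :: "'a \<Rightarrow> real^'n"
  assumes t: "t < T" and wF: "w \<in> borel_measurable (F t)"
    and wi: "\<And>i j. integrable M (\<lambda>\<omega>. w \<omega> $ i * w \<omega> $ j)"
  shows "integrable M (\<lambda>\<omega>. (P t \<omega> \<bullet> w \<omega>)\<^sup>2)"
    "(\<integral>\<omega>. (P t \<omega> \<bullet> w \<omega>)\<^sup>2 \<partial>M)
      = (\<Sum>i\<in>UNIV. \<Sum>j\<in>UNIV. (\<integral>\<omega>. w \<omega> $ i * w \<omega> $ j \<partial>M) * secmom M P t $ i $ j)"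
proof -
  have eq: "(\<lambda>\<omega>. (P t \<omega> \<bullet> w \<omega>)\<^sup>2)
      = (\<lambda>\<omega>. \<Sum>i\<in>UNIV. \<Sum>j\<in>UNIV. (w \<omega> $ i * w \<omega> $ j) * (P t \<omega> $ i * P t \<omega> $ j))"
    by (simp add: inner_vec_def power2_eq_square sum_product algebra_simps)
  have wF': "(\<lambda>\<omega>. w \<omega> $ i * w \<omega> $ j) \<in> borel_measurable (F t)" for i j using wF by measurable
  have gb: "(\<lambda>p::real^'n. p $ i * p $ j) \<in> borel_measurable borel" for i j by measurable
  have PM[measurable]: "P t \<in> borel_measurable M" using P_facts(1)[OF t] .
  have Pij: "integrable M (\<lambda>\<omega>. P t \<omega> $ i * P t \<omega> $ j)" for i j
    by (rule L2_mult) (use P_facts(2)[OF t] in auto)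
  note im = indep_mult[OF t wF' gb wi Pij]
  show "integrable M (\<lambda>\<omega>. (P t \<omega> \<bullet> w \<omega>)\<^sup>2)" unfolding eq using im(1) by auto
  show "(\<integral>\<omega>. (P t \<omega> \<bullet> w \<omega>)\<^sup>2 \<partial>M)
      = (\<Sum>i\<in>UNIV. \<Sum>j\<in>UNIV. (\<integral>\<omega>. w \<omega> $ i * w \<omega> $ j \<partial>M) * secmom M P t $ i $ j)"
    unfolding eq using im by (simp add: Bochner_Integration.integral_sum integrable_sum secmom_def)
qed

lemma quad_sum:
  fixes A :: "real^'n^'n"
  shows "u \<bullet> (A *v u) = (\<Sum>i\<in>UNIV. \<Sum>j\<in>UNIV. A $ i $ j * (u $ i * u $ j))"
  by (simp add: inner_vec_def matrix_vector_mult_def sum_distrib_left algebra_simps)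


end


lemma sym_secmom: "transpose (secmom M P t) = secmom M P t"
  by (simp add: transpose_def secmom_def vec_eq_iff mult.commute)

locale mv2 = mv M P T for M :: "'a measure" and P :: "nat \<Rightarrow> 'a \<Rightarrow> real^'n" and T +
  assumes pd: "\<And>t v. t < T \<Longrightarrow> v \<noteq> 0 \<Longrightarrow> v \<bullet> (secmom M P t *v v) > 0"
begin

lemma psd: "t < T \<Longrightarrow> 0 \<le> v \<bullet> (secmom M P t *v v)"
  using pd[of t v] by (cases "v = 0") auto

lemma MK: "t < T \<Longrightarrow> secmom M P t *v Kvec M P t = meanv M P t"
proof -
  assume t: "t < T"
  have "invertible (secmom M P t)" by (rule pd_invertible) (use pd t in auto)
  then have "secmom M P t ** matrix_inv (secmom M P t) = mat 1" by (rule inv_right)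
  then show ?thesis unfolding Kvec_def by (simp add: matrix_vector_mul_assoc)
qed

lemma B_eq: "Bcoef M P t = meanv M P t \<bullet> Kvec M P t"
  by (simp add: Bcoef_def Kvec_def)

lemma jensen_quad:
  fixes z :: "'a \<Rightarrow> real^'n"
  assumes t: "t < T" and iz: "integrable M z" and izz: "integrable M (\<lambda>\<omega>. z \<omega> \<bullet> (secmom M P t *v z \<omega>))"
  shows "integral\<^sup>L M z \<bullet> (secmom M P t *v integral\<^sup>L M z) \<le> (\<integral>\<omega>. z \<omega> \<bullet> (secmom M P t *v z \<omega>) \<partial>M)"
proof -
  define A where "A = secmom M P t"
  define a where "a = integral\<^sup>L M z"
  have sym: "transpose A = A" by (simp add: A_def sym_secmom)
  have pw: "2 * (z \<omega> \<bullet> (A *v a)) - a \<bullet> (A *v a) \<le> z \<omega> \<bullet> (A *v z \<omega>)" for \<omega>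
  proof -
    have "0 \<le> (z \<omega> + (-1) *\<^sub>R a) \<bullet> (A *v (z \<omega> + (-1) *\<^sub>R a))" using psd[OF t] by (simp add: A_def)
    also have "\<dots> = z \<omega> \<bullet> (A *v z \<omega>) + 2 * (-1) * (a \<bullet> (A *v z \<omega>)) + (-1)\<^sup>2 * (a \<bullet> (A *v a))"
      by (rule quad_expand[OF sym])
    also have "a \<bullet> (A *v z \<omega>) = z \<omega> \<bullet> (A *v a)" by (rule sym_form[OF sym])
    finally show ?thesis by simp
  qed
  have "(\<integral>\<omega>. 2 * (z \<omega> \<bullet> (A *v a)) - a \<bullet> (A *v a) \<partial>M) \<le> (\<integral>\<omega>. z \<omega> \<bullet> (A *v z \<omega>) \<partial>M)"
    by (rule integral_mono) (use pw izz iz in \<open>auto simp: A_def\<close>)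
  also have "(\<integral>\<omega>. 2 * (z \<omega> \<bullet> (A *v a)) - a \<bullet> (A *v a) \<partial>M) = 2 * (a \<bullet> (A *v a)) - a \<bullet> (A *v a)"
    using iz by (simp add: prob_space a_def)
  finally show ?thesis by (simp add: A_def a_def)
qed

end

context mv2 begin

lemma step:
  fixes v :: "nat \<Rightarrow> 'a \<Rightarrow> real^'n" and s :: "nat \<Rightarrow> real" and x0 :: real
  assumes t: "t < T" and g: "good v (Suc t)"
  defines "x \<equiv> wealth x0 s P v t" and "u \<equiv> v t"
  defines "\<mu> \<equiv> integral\<^sup>L M x" and "a \<equiv> integral\<^sup>L M u"
  defines "S \<equiv> secmom M P t" and "m \<equiv> meanv M P t" and "K \<equiv> Kvec M P t" and "B \<equiv> Bcoef M P t"
  defines "z \<equiv> \<lambda>\<omega>. u \<omega> + (s t * (x \<omega> - \<mu>)) *\<^sub>R K"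
  shows "integral\<^sup>L M (wealth x0 s P v (Suc t)) = s t * \<mu> + m \<bullet> a"
    and "(\<integral>\<omega>. (wealth x0 s P v (Suc t) \<omega> - integral\<^sup>L M (wealth x0 s P v (Suc t)))\<^sup>2 \<partial>M)
         = (s t)\<^sup>2 * (1 - B) * (\<integral>\<omega>. (x \<omega> - \<mu>)\<^sup>2 \<partial>M) + (\<integral>\<omega>. z \<omega> \<bullet> (S *v z \<omega>) \<partial>M) - (m \<bullet> a)\<^sup>2"
    and "integrable M z" "integral\<^sup>L M z = a" "integrable M (\<lambda>\<omega>. z \<omega> \<bullet> (S *v z \<omega>))"
proof -
  have tle: "t \<le> T" using t by simp
  have gt: "good v t" using g by (rule good_mono)
  have xF[measurable]: "x \<in> borel_measurable (F t)" unfolding x_def using wealth_meas[OF tle gt] .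
  have xM[measurable]: "x \<in> borel_measurable M" using meas_F_M[OF tle xF] .
  have x2: "integrable M (\<lambda>\<omega>. (x \<omega>)\<^sup>2)" unfolding x_def using wealth_sq[OF tle gt] .
  have ix: "integrable M x" using L2_L1[OF xM x2] .
  note gf = good_facts[OF g t]
  have uF[measurable]: "u \<in> borel_measurable (F t)" and uM[measurable]: "u \<in> borel_measurable M"
    and usq: "integrable M (\<lambda>\<omega>. (norm (u \<omega>))\<^sup>2)" using gf by (auto simp: u_def)
  have ui2: "integrable M (\<lambda>\<omega>. (u \<omega> $ i)\<^sup>2)" for i using comp_L2[OF uM usq] .
  have ui: "integrable M (\<lambda>\<omega>. u \<omega> $ i)" for i by (rule L2_L1[OF _ ui2]) measurable
  have iu: "integrable M u" using vec_integrable[OF uM usq] .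
  have ai: "a $ i = (\<integral>\<omega>. u \<omega> $ i \<partial>M)" for i unfolding a_def by (rule integral_nth[OF iu])
  have PM[measurable]: "P t \<in> borel_measurable M" using Pmeas t by simp
  note Pu = Pdot[OF t uF ui]
  have EPu: "(\<integral>\<omega>. P t \<omega> \<bullet> u \<omega> \<partial>M) = m \<bullet> a"
    unfolding Pu(2) by (simp add: ai inner_vec_def m_def mult.commute)
  have x'eq: "wealth x0 s P v (Suc t) = (\<lambda>\<omega>. s t * x \<omega> + P t \<omega> \<bullet> u \<omega>)"
    by (simp add: x_def u_def)
  show mean: "integral\<^sup>L M (wealth x0 s P v (Suc t)) = s t * \<mu> + m \<bullet> a"
    unfolding x'eq using ix Pu(1) EPu by (simp add: \<mu>_def)
  have xuF: "(\<lambda>\<omega>. x \<omega> *\<^sub>R u \<omega>) \<in> borel_measurable (F t)" by measurable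
  have xui: "integrable M (\<lambda>\<omega>. x \<omega> * u \<omega> $ i)" for i by (rule L2_mult[OF xM _ x2 ui2]) (use uM in measurable)
  have xui': "integrable M (\<lambda>\<omega>. (x \<omega> *\<^sub>R u \<omega>) $ i)" for i using xui[of i] by simp
  note Pxu = Pdot[OF t xuF xui']
  define E1 where "E1 = (\<Sum>i\<in>UNIV. (\<integral>\<omega>. x \<omega> * u \<omega> $ i \<partial>M) * m $ i)"
  have xPu: "(\<lambda>\<omega>. x \<omega> * (P t \<omega> \<bullet> u \<omega>)) = (\<lambda>\<omega>. P t \<omega> \<bullet> (x \<omega> *\<^sub>R u \<omega>))" by simp
  have ixPu: "integrable M (\<lambda>\<omega>. x \<omega> * (P t \<omega> \<bullet> u \<omega>))" unfolding xPu using Pxu(1) .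
  have ExPu: "(\<integral>\<omega>. x \<omega> * (P t \<omega> \<bullet> u \<omega>) \<partial>M) = E1" unfolding xPu Pxu(2) E1_def m_def by simp
  have uiM: "(\<lambda>\<omega>. u \<omega> $ i) \<in> borel_measurable M" for i by measurable
  have uij: "integrable M (\<lambda>\<omega>. u \<omega> $ i * u \<omega> $ j)" for i j by (rule L2_mult[OF uiM uiM ui2 ui2])
  note Pu2 = Pdot2[OF t uF uij]
  define E2 where "E2 = (\<Sum>i\<in>UNIV. \<Sum>j\<in>UNIV. (\<integral>\<omega>. u \<omega> $ i * u \<omega> $ j \<partial>M) * S $ i $ j)"
  have x'2: "(\<lambda>\<omega>. (s t * x \<omega> + P t \<omega> \<bullet> u \<omega>)\<^sup>2)
     = (\<lambda>\<omega>. (s t)\<^sup>2 * (x \<omega>)\<^sup>2 + (2 * s t) * (x \<omega> * (P t \<omega> \<bullet> u \<omega>)) + (P t \<omega> \<bullet> u \<omega>)\<^sup>2)"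
    by (simp add: power2_eq_square algebra_simps)
  have ix'2: "integrable M (\<lambda>\<omega>. (wealth x0 s P v (Suc t) \<omega>)\<^sup>2)"
    unfolding x'eq x'2 using x2 ixPu Pu2(1) by simp
  have Ex'2: "(\<integral>\<omega>. (wealth x0 s P v (Suc t) \<omega>)\<^sup>2 \<partial>M) = (s t)\<^sup>2 * (\<integral>\<omega>. (x \<omega>)\<^sup>2 \<partial>M) + 2 * s t * E1 + E2"
    unfolding x'eq x'2 using x2 ixPu Pu2(1) ExPu Pu2(2) by (simp add: E2_def S_def)
  have ix': "integrable M (wealth x0 s P v (Suc t))" unfolding x'eq using ix Pu(1) by simp
  have var': "(\<integral>\<omega>. (wealth x0 s P v (Suc t) \<omega> - integral\<^sup>L M (wealth x0 s P v (Suc t)))\<^sup>2 \<partial>M)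
      = (\<integral>\<omega>. (wealth x0 s P v (Suc t) \<omega>)\<^sup>2 \<partial>M) - (integral\<^sup>L M (wealth x0 s P v (Suc t)))\<^sup>2"
    by (rule variance_eq[OF ix' ix'2])
  have var: "(\<integral>\<omega>. (x \<omega> - \<mu>)\<^sup>2 \<partial>M) = (\<integral>\<omega>. (x \<omega>)\<^sup>2 \<partial>M) - \<mu>\<^sup>2"
    unfolding \<mu>_def by (rule variance_eq[OF ix x2])
  have sym: "transpose S = S" by (simp add: S_def sym_secmom)
  have SK: "S *v K = m" using MK[OF t] by (simp add: S_def K_def m_def)
  have Bm: "B = m \<bullet> K" by (simp add: B_def B_eq m_def K_def)
  have KSu: "K \<bullet> (S *v u \<omega>) = m \<bullet> u \<omega>" for \<omega>
    using sym_form[OF sym, of K "u \<omega>"] SK by (simp add: inner_commute)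
  have KSK: "K \<bullet> (S *v K) = B" using SK Bm by (simp add: inner_commute)
  have zz: "(\<lambda>\<omega>. z \<omega> \<bullet> (S *v z \<omega>)) = (\<lambda>\<omega>. (\<Sum>i\<in>UNIV. \<Sum>j\<in>UNIV. S $ i $ j * (u \<omega> $ i * u \<omega> $ j))
     + (2 * s t) * (\<Sum>i\<in>UNIV. m $ i * (x \<omega> * u \<omega> $ i)) - (2 * s t * \<mu>) * (\<Sum>i\<in>UNIV. m $ i * u \<omega> $ i)
     + ((s t)\<^sup>2 * B) * (x \<omega> - \<mu>)\<^sup>2)"
  proof
    fix \<omega>
    have "z \<omega> \<bullet> (S *v z \<omega>) = u \<omega> \<bullet> (S *v u \<omega>) + 2 * (s t * (x \<omega> - \<mu>)) * (m \<bullet> u \<omega>)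
        + (s t * (x \<omega> - \<mu>))\<^sup>2 * B"
      unfolding z_def quad_expand[OF sym] KSu KSK ..
    also have "u \<omega> \<bullet> (S *v u \<omega>) = (\<Sum>i\<in>UNIV. \<Sum>j\<in>UNIV. S $ i $ j * (u \<omega> $ i * u \<omega> $ j))"
      by (rule quad_sum)
    also have "m \<bullet> u \<omega> = (\<Sum>i\<in>UNIV. m $ i * u \<omega> $ i)" by (simp add: inner_vec_def)
    finally show "z \<omega> \<bullet> (S *v z \<omega>) = (\<Sum>i\<in>UNIV. \<Sum>j\<in>UNIV. S $ i $ j * (u \<omega> $ i * u \<omega> $ j))
     + (2 * s t) * (\<Sum>i\<in>UNIV. m $ i * (x \<omega> * u \<omega> $ i)) - (2 * s t * \<mu>) * (\<Sum>i\<in>UNIV. m $ i * u \<omega> $ i)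
     + ((s t)\<^sup>2 * B) * (x \<omega> - \<mu>)\<^sup>2"
      by (simp add: power2_eq_square sum_distrib_left algebra_simps)
  qed
  have ixm2: "integrable M (\<lambda>\<omega>. (x \<omega> - \<mu>)\<^sup>2)"
    using x2 ix by (simp add: power2_eq_square algebra_simps)
  define f1 where "f1 \<omega> = (\<Sum>i\<in>UNIV. \<Sum>j\<in>UNIV. S $ i $ j * (u \<omega> $ i * u \<omega> $ j))" for \<omega>
  define f2 where "f2 \<omega> = (\<Sum>i\<in>UNIV. m $ i * (x \<omega> * u \<omega> $ i))" for \<omega>
  define f3 where "f3 \<omega> = (\<Sum>i\<in>UNIV. m $ i * u \<omega> $ i)" for \<omega>
  define f4 where "f4 \<omega> = (x \<omega> - \<mu>)\<^sup>2" for \<omega>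
  have zz': "(\<lambda>\<omega>. z \<omega> \<bullet> (S *v z \<omega>)) = (\<lambda>\<omega>. f1 \<omega> + (2 * s t) * f2 \<omega> - (2 * s t * \<mu>) * f3 \<omega> + ((s t)\<^sup>2 * B) * f4 \<omega>)"
    unfolding zz f1_def f2_def f3_def f4_def ..
  have i1: "integrable M f1" unfolding f1_def using uij by simp
  have i2: "integrable M f2" unfolding f2_def using xui by simp
  have i3: "integrable M f3" unfolding f3_def using ui by simp
  have i4: "integrable M f4" unfolding f4_def using ixm2 .
  have e1: "integral\<^sup>L M f1 = E2" unfolding f1_def E2_def using uij
    by (simp add: Bochner_Integration.integral_sum mult.commute)
  have e2: "integral\<^sup>L M f2 = E1" unfolding f2_def E1_def using xui
    by (simp add: Bochner_Integration.integral_sum mult.commute)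
  have e3: "integral\<^sup>L M f3 = m \<bullet> a" unfolding f3_def using ui
    by (simp add: Bochner_Integration.integral_sum ai inner_vec_def)
  show izz: "integrable M (\<lambda>\<omega>. z \<omega> \<bullet> (S *v z \<omega>))"
    unfolding zz' using i1 i2 i3 i4 by simp
  have Ezz: "(\<integral>\<omega>. z \<omega> \<bullet> (S *v z \<omega>) \<partial>M) = E2 + 2 * s t * E1 - 2 * s t * \<mu> * (m \<bullet> a)
     + (s t)\<^sup>2 * B * (\<integral>\<omega>. (x \<omega> - \<mu>)\<^sup>2 \<partial>M)"
    unfolding zz' using i1 i2 i3 i4
    by (simp add: e1 e2 e3 f4_def[symmetric])
  show "(\<integral>\<omega>. (wealth x0 s P v (Suc t) \<omega> - integral\<^sup>L M (wealth x0 s P v (Suc t)))\<^sup>2 \<partial>M)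
         = (s t)\<^sup>2 * (1 - B) * (\<integral>\<omega>. (x \<omega> - \<mu>)\<^sup>2 \<partial>M) + (\<integral>\<omega>. z \<omega> \<bullet> (S *v z \<omega>) \<partial>M) - (m \<bullet> a)\<^sup>2"
  proof -
    have "(\<integral>\<omega>. (wealth x0 s P v (Suc t) \<omega> - integral\<^sup>L M (wealth x0 s P v (Suc t)))\<^sup>2 \<partial>M)
       = (s t)\<^sup>2 * (\<integral>\<omega>. (x \<omega>)\<^sup>2 \<partial>M) + 2 * s t * E1 + E2 - (s t * \<mu> + m \<bullet> a)\<^sup>2"
      using var' Ex'2 mean by simp
    then show ?thesis unfolding Ezz var by (simp add: power2_eq_square algebra_simps)
  qed
  show iz: "integrable M z" unfolding z_def using iu ix by simp
  show "integral\<^sup>L M z = a" unfolding z_def using iu ix by (simp add: a_def \<mu>_def prob_space)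
qed

end

declare pcoef.simps[simp del] qcoef.simps[simp del]

lemma sq_aff: "(c - s * (x - b))\<^sup>2 * n = ((s)\<^sup>2 * n) * x\<^sup>2 - (2 * s * (c + s * b) * n) * x + (c + s * b)\<^sup>2 * (n::real)"
  by (simp add: power2_eq_square algebra_simps)

lemma fb_eq: "fb_wealth x0 s P (ustar_rule M P x0 s lam \<theta> T) t \<omega> = wealth x0 s P (ustar_strategy M P x0 s lam \<theta> T) t \<omega>"
proof (induction t arbitrary: \<omega>)
  case 0 then show ?case by simp
next
  case (Suc t)
  have u: "ustar_strategy M P x0 s lam \<theta> T t \<omega> = ustar_rule M P x0 s lam \<theta> T t (fb_wealth x0 s P (ustar_rule M P x0 s lam \<theta> T) t \<omega>)"
    by (rule ustar_strategy_def)
  show ?case by (simp only: fb_wealth.simps wealth.simps u Suc.IH)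
qed

lemma ustar_eq: "ustar_strategy M P x0 s lam \<theta> T t \<omega>
   = ustar_rule M P x0 s lam \<theta> T t (wealth x0 s P (ustar_strategy M P x0 s lam \<theta> T) t \<omega>)"
proof -
  have "ustar_strategy M P x0 s lam \<theta> T t \<omega> = ustar_rule M P x0 s lam \<theta> T t (fb_wealth x0 s P (ustar_rule M P x0 s lam \<theta> T) t \<omega>)"
    by (rule ustar_strategy_def)
  also have "fb_wealth x0 s P (ustar_rule M P x0 s lam \<theta> T) t \<omega> = wealth x0 s P (ustar_strategy M P x0 s lam \<theta> T) t \<omega>"
    by (rule fb_eq)
  finally show ?thesis .
qed

locale mv3 = mv2 M P T for M :: "'a measure" and P :: "nat \<Rightarrow> 'a \<Rightarrow> real^'n" and T +
  fixes s lam \<theta> :: "nat \<Rightarrow> real" and x0 :: real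
  assumes T1: "T \<ge> 1" and s1: "\<And>t. t < T \<Longrightarrow> s t > 1"
    and Bpos: "\<And>t. t < T \<Longrightarrow> 0 < Bcoef M P t \<and> Bcoef M P t < 1"
    and th: "\<forall>t\<in>{1..T}. \<theta> t \<ge> 0" and thT: "\<theta> T > 0"
begin

abbreviation "pp \<equiv> pcoef T \<theta> s (Bcoef M P)"
abbreviation "qq \<equiv> qcoef T lam s"
abbreviation "cc t \<equiv> qq (Suc t) / (2 * pp (Suc t)) / (1 - Bcoef M P t)"
abbreviation "us \<equiv> ustar_strategy M P x0 s lam \<theta> T"
abbreviation "xs \<equiv> wealth x0 s P us"
abbreviation "xb \<equiv> ustar_xbar M P x0 s lam \<theta> T"

lemma pp_pos: "1 \<le> t \<Longrightarrow> pp t > 0"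
  by (rule pcoef_pos) (use th thT Bpos s1 in auto)

lemma us_eq: "us t \<omega> = (cc t - s t * (xs t \<omega> - xb t)) *\<^sub>R Kvec M P t"
  by (subst ustar_eq) (simp add: ustar_rule_def algebra_simps)

lemma us_good: "t \<le> T \<Longrightarrow> good us t"
proof (induction t)
  case 0 then show ?case by (simp add: good_def)
next
  case (Suc t)
  then have t: "t < T" and g: "good us t" by auto
  have xF[measurable]: "xs t \<in> borel_measurable (F t)" using wealth_meas[OF _ g] t by simp
  have xM[measurable]: "xs t \<in> borel_measurable M" using meas_F_M[OF _ xF] t by simp
  have x2: "integrable M (\<lambda>\<omega>. (xs t \<omega>)\<^sup>2)" using wealth_sq[OF _ g] t by simp
  have ix: "integrable M (xs t)" using L2_L1[OF xM x2] .
  have ueq: "us t = (\<lambda>\<omega>. (cc t - s t * (xs t \<omega> - xb t)) *\<^sub>R Kvec M P t)"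
    by (rule ext) (rule us_eq)
  have uF: "us t \<in> borel_measurable (F t)" unfolding ueq by measurable
  have "integrable M (\<lambda>\<omega>. (cc t - s t * (xs t \<omega> - xb t))\<^sup>2 * (norm (Kvec M P t))\<^sup>2)"
  proof -
    have eq: "(\<lambda>\<omega>. (cc t - s t * (xs t \<omega> - xb t))\<^sup>2 * (norm (Kvec M P t))\<^sup>2)
      = (\<lambda>\<omega>. ((s t)\<^sup>2 * (norm (Kvec M P t))\<^sup>2) * (xs t \<omega>)\<^sup>2
          - (2 * s t * (cc t + s t * xb t) * (norm (Kvec M P t))\<^sup>2) * xs t \<omega>
          + (cc t + s t * xb t)\<^sup>2 * (norm (Kvec M P t))\<^sup>2)"
      by (simp only: sq_aff)
    show ?thesis unfolding eq using x2 ix by simp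
  qed
  then have "integrable M (\<lambda>\<omega>. (norm (us t \<omega>))\<^sup>2)"
    unfolding ueq by (simp add: power_mult_distrib)
  then show ?case using g uF unfolding good_def by (auto simp: less_Suc_eq)
qed

lemma us_amean0:
  assumes t: "t < T" and ix: "integrable M (xs t)" and IH: "integral\<^sup>L M (xs t) = xb t"
  shows "integral\<^sup>L M (us t) = cc t *\<^sub>R Kvec M P t"
proof -
  have "us t = (\<lambda>\<omega>. (cc t - s t * (xs t \<omega> - xb t)) *\<^sub>R Kvec M P t)"
    by (rule ext) (rule us_eq)
  then have "integral\<^sup>L M (us t) = (\<integral>\<omega>. cc t - s t * (xs t \<omega> - xb t) \<partial>M) *\<^sub>R Kvec M P t"
    using ix by simp
  also have "(\<integral>\<omega>. cc t - s t * (xs t \<omega> - xb t) \<partial>M) = cc t - s t * (integral\<^sup>L M (xs t) - xb t)"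
    using ix by (simp add: prob_space)
  finally show ?thesis using IH by simp
qed

lemma us_mean:
  assumes "t \<le> T" shows "integral\<^sup>L M (xs t) = xb t"
  using assms
proof (induction t)
  case 0 then show ?case by (simp add: ustar_xbar_def prob_space)
next
  case (Suc t)
  then have t: "t < T" and IH: "integral\<^sup>L M (xs t) = xb t" by auto
  have g: "good us (Suc t)" using us_good Suc by simp
  have gt: "good us t" using us_good t by simp
  have xM[measurable]: "xs t \<in> borel_measurable M" using meas_F_M[OF _ wealth_meas[OF _ gt]] t by simp
  have ix: "integrable M (xs t)" using L2_L1[OF xM wealth_sq[OF _ gt]] t by simp
  have a: "integral\<^sup>L M (us t) = cc t *\<^sub>R Kvec M P t"
    using us_amean0[OF t ix IH] .
  have "integral\<^sup>L M (xs (Suc t)) = s t * xb t + meanv M P t \<bullet> (cc t *\<^sub>R Kvec M P t)"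
    using step(1)[OF t g] IH a by simp
  also have "\<dots> = s t * xb t + cc t * Bcoef M P t" by (simp add: B_eq)
  also have "\<dots> = xb (Suc t)"
    using Bpos[OF t] by (simp add: ustar_xbar_def)
  finally show ?case .
qed

lemma us_amean:
  assumes t: "t < T" shows "integral\<^sup>L M (us t) = cc t *\<^sub>R Kvec M P t"
proof -
  have gt: "good us t" using us_good t by simp
  have xM[measurable]: "xs t \<in> borel_measurable M" using meas_F_M[OF _ wealth_meas[OF _ gt]] t by simp
  have ix: "integrable M (xs t)" using L2_L1[OF xM wealth_sq[OF _ gt]] t by simp
  have IH: "integral\<^sup>L M (xs t) = xb t" using us_mean t by simp
  show ?thesis using us_amean0[OF t ix IH] .
qed

lemma good_Suc: "good v T \<Longrightarrow> t < T \<Longrightarrow> good v (Suc t)"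
  unfolding good_def by auto

definition zf where
  "zf v t \<omega> = v t \<omega> + (s t * (wealth x0 s P v t \<omega> - integral\<^sup>L M (wealth x0 s P v t))) *\<^sub>R Kvec M P t"

definition hh where
  "hh v t = (\<integral>\<omega>. zf v t \<omega> \<bullet> (secmom M P t *v zf v t \<omega>) \<partial>M) - (meanv M P t \<bullet> integral\<^sup>L M (v t))\<^sup>2"

lemma obj_formula:
  assumes g: "good v T"
  shows "objective M x0 s P lam \<theta> T v = qq 1 * s 0 * x0
    + (\<Sum>t<T. qq (Suc t) * (meanv M P t \<bullet> integral\<^sup>L M (v t)) - pp (Suc t) * hh v t)"
  unfolding objective_def
proof (rule telescope[where B = "Bcoef M P"])
  show "T \<ge> 1" by (rule T1)
  show "\<forall>t<T. integral\<^sup>L M (wealth x0 s P v (Suc t))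
      = s t * integral\<^sup>L M (wealth x0 s P v t) + meanv M P t \<bullet> integral\<^sup>L M (v t)"
    using step(1)[OF _ good_Suc[OF g]] by blast
  show "\<forall>t<T. (\<integral>\<omega>. (wealth x0 s P v (Suc t) \<omega> - integral\<^sup>L M (wealth x0 s P v (Suc t)))\<^sup>2 \<partial>M)
      = (s t)\<^sup>2 * (1 - Bcoef M P t) * (\<integral>\<omega>. (wealth x0 s P v t \<omega> - integral\<^sup>L M (wealth x0 s P v t))\<^sup>2 \<partial>M) + hh v t"
    using step(2)[OF _ good_Suc[OF g]] by (simp add: hh_def zf_def)
  show "(\<integral>\<omega>. (wealth x0 s P v 0 \<omega> - integral\<^sup>L M (wealth x0 s P v 0))\<^sup>2 \<partial>M) = 0"
    by (simp add: prob_space)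
  show "integral\<^sup>L M (wealth x0 s P v 0) = x0" by (simp add: prob_space)
qed

lemma hh_lower:
  assumes g: "good v T" and t: "t < T"
  shows "integral\<^sup>L M (v t) \<bullet> (secmom M P t *v integral\<^sup>L M (v t)) - (meanv M P t \<bullet> integral\<^sup>L M (v t))\<^sup>2 \<le> hh v t"
proof -
  note st = step[OF t good_Suc[OF g t]]
  have iz: "integrable M (zf v t)" using st(3) by (simp add: zf_def[abs_def])
  have ez: "integral\<^sup>L M (zf v t) = integral\<^sup>L M (v t)" using st(4) by (simp add: zf_def[abs_def])
  have izz: "integrable M (\<lambda>\<omega>. zf v t \<omega> \<bullet> (secmom M P t *v zf v t \<omega>))" using st(5) by (simp add: zf_def)
  show ?thesis using jensen_quad[OF t iz izz] unfolding ez hh_def by simp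
qed

abbreviation "optval \<equiv> qq 1 * s 0 * x0 + (\<Sum>t<T. pp (Suc t) * (qq (Suc t) / (2 * pp (Suc t)))\<^sup>2 * Bcoef M P t / (1 - Bcoef M P t))"

lemma obj_le:
  assumes g: "good v T"
  shows "objective M x0 s P lam \<theta> T v \<le> optval"
  unfolding obj_formula[OF g]
proof (rule add_left_mono, rule sum_mono)
  fix t assume "t \<in> {..<T}"
  then have t: "t < T" by simp
  define a where "a = integral\<^sup>L M (v t)"
  define m where "m = meanv M P t"
  define S where "S = secmom M P t"
  define K where "K = Kvec M P t"
  have p: "pp (Suc t) > 0" by (rule pp_pos) simp
  have B: "Bcoef M P t = m \<bullet> K" by (simp add: B_eq m_def K_def)
  have hl: "a \<bullet> (S *v a) - (m \<bullet> a)\<^sup>2 \<le> hh v t" using hh_lower[OF g t] by (simp add: a_def S_def m_def)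
  have cs: "(m \<bullet> a)\<^sup>2 \<le> Bcoef M P t * (a \<bullet> (S *v a))"
    unfolding B by (rule quad_cs) (use sym_secmom psd[OF t] MK[OF t] Bpos[OF t] in \<open>auto simp: S_def K_def m_def B\<close>)
  have "qq (Suc t) * (m \<bullet> a) - pp (Suc t) * hh v t \<le> qq (Suc t) * (m \<bullet> a) - pp (Suc t) * (a \<bullet> (S *v a) - (m \<bullet> a)\<^sup>2)"
    using hl p by (simp add: mult_left_mono)
  also have "\<dots> \<le> pp (Suc t) * (qq (Suc t) / (2 * pp (Suc t)))\<^sup>2 * Bcoef M P t / (1 - Bcoef M P t)"
    by (rule opt_scalar[OF p _ _ cs]) (use Bpos[OF t] in auto)
  finally show "qq (Suc t) * (meanv M P t \<bullet> integral\<^sup>L M (v t)) - pp (Suc t) * hh v t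
      \<le> pp (Suc t) * (qq (Suc t) / (2 * pp (Suc t)))\<^sup>2 * Bcoef M P t / (1 - Bcoef M P t)"
    by (simp add: a_def m_def)
qed

lemma obj_us: "objective M x0 s P lam \<theta> T us = optval"
  unfolding obj_formula[OF us_good[OF order_refl]]
proof (rule arg_cong[where f="\<lambda>x. qq 1 * s 0 * x0 + x"], rule sum.cong[OF refl])
  fix t assume "t \<in> {..<T}"
  then have t: "t < T" by simp
  define m where "m = meanv M P t"
  define S where "S = secmom M P t"
  define K where "K = Kvec M P t"
  define a where "a = (qq (Suc t) / (2 * pp (Suc t)) / (1 - m \<bullet> K)) *\<^sub>R K"
  have p: "pp (Suc t) > 0" by (rule pp_pos) simp
  have B: "Bcoef M P t = m \<bullet> K" by (simp add: B_eq m_def K_def)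
  have ea: "integral\<^sup>L M (us t) = a" unfolding us_amean[OF t] a_def B[symmetric] by (simp add: K_def)
  have zc: "zf us t \<omega> = a" for \<omega>
  proof -
    have z3: "integral\<^sup>L M (xs t) = xb t" using us_mean t by simp
    have "zf us t \<omega> = (cc t - s t * (xs t \<omega> - xb t)) *\<^sub>R Kvec M P t
        + (s t * (xs t \<omega> - integral\<^sup>L M (xs t))) *\<^sub>R Kvec M P t"
      unfolding zf_def us_eq[of t \<omega>] ..
    also have "\<dots> = cc t *\<^sub>R Kvec M P t" unfolding z3 scaleR_left_distrib[symmetric] by simp
    finally show ?thesis by (simp add: a_def B K_def)
  qed
  have hh: "hh us t = a \<bullet> (S *v a) - (m \<bullet> a)\<^sup>2"
    unfolding hh_def zc ea by (simp add: prob_space S_def m_def)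
  have "qq (Suc t) * (m \<bullet> a) - pp (Suc t) * (a \<bullet> (S *v a) - (m \<bullet> a)\<^sup>2)
     = pp (Suc t) * (qq (Suc t) / (2 * pp (Suc t)))\<^sup>2 * (m \<bullet> K) / (1 - m \<bullet> K)"
    unfolding a_def by (rule opt_value) (use sym_secmom MK[OF t] p Bpos[OF t] B in \<open>auto simp: S_def K_def m_def\<close>)
  then show "qq (Suc t) * (meanv M P t \<bullet> integral\<^sup>L M (us t)) - pp (Suc t) * hh us t
      = pp (Suc t) * (qq (Suc t) / (2 * pp (Suc t)))\<^sup>2 * Bcoef M P t / (1 - Bcoef M P t)"
    by (simp add: ea hh B m_def)
qed

end

theorem proposition1:
  fixes M :: "'a measure" and P :: "nat \<Rightarrow> 'a \<Rightarrow> real^'n"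
    and s lam \<theta> :: "nat \<Rightarrow> real" and x0 :: real and T :: nat
  defines "B \<equiv> Bcoef M P" and "K \<equiv> Kvec M P"
    and "p \<equiv> pcoef T \<theta> s (Bcoef M P)"
    and "q \<equiv> qcoef T lam s"
    and "xb \<equiv> ustar_xbar M P x0 s lam \<theta> T"
    and "ustar \<equiv> ustar_strategy M P x0 s lam \<theta> T"
    and "x \<equiv> wealth x0 s P (ustar_strategy M P x0 s lam \<theta> T)"
  assumes "prob_space M"
    and "T \<ge> 1"
    and "\<forall>t<T. s t > 1"
    and "\<forall>t<T. P t \<in> borel_measurable M"
    and "prob_space.indep_vars M (\<lambda>_. borel) P {..<T}"
    and "\<forall>t<T. integrable M (\<lambda>\<omega>. (norm (P t \<omega>))\<^sup>2)"
    and "\<forall>t<T. \<forall>v. v \<noteq> 0 \<longrightarrow> v \<bullet> (secmom M P t *v v) > 0"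
    and "\<forall>t<T. 0 < B t \<and> B t < 1"
    and "\<forall>t\<in>{1..T}. \<theta> t \<ge> 0"
    and "\<theta> T > 0"
  shows "(\<forall>t\<in>{1..T}. p t > 0)
    \<and> (\<forall>t\<le>T. xb t = x0 * (\<Prod>k<t. s k)
          + (\<Sum>j<t. q (Suc j) / (2 * p (Suc j)) * (B j / (1 - B j)) * (\<Prod>l\<in>{Suc j..<t}. s l)))
    \<and> admissible M P T ustar
    \<and> (\<forall>v. admissible M P T v \<longrightarrow> objective M x0 s P lam \<theta> T v \<le> objective M x0 s P lam \<theta> T ustar)
    \<and> (\<forall>t\<le>T. integral\<^sup>L M (x t) = xb t)
    \<and> (\<forall>t<T. \<forall>\<omega>\<in>space M. ustar t \<omega> - integral\<^sup>L M (ustar t)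
            = (- (s t * (x t \<omega> - integral\<^sup>L M (x t)))) *\<^sub>R K t)
    \<and> (\<forall>t<T. integral\<^sup>L M (ustar t) = (q (Suc t) / (2 * p (Suc t)) / (1 - B t)) *\<^sub>R K t)"
proof -
  note A = assms
  have ax1: "mv_axioms M P T"
  proof (rule mv_axioms.intro)
    show "\<And>t. t < T \<Longrightarrow> P t \<in> borel_measurable M" using A(11) by blast
    show "prob_space.indep_vars M (\<lambda>_. borel) P {..<T}" using A(12) .
    show "\<And>t. t < T \<Longrightarrow> integrable M (\<lambda>\<omega>. (norm (P t \<omega>))\<^sup>2)" using A(13) by blast
  qed
  have ax2: "mv2_axioms M P T"
  proof (rule mv2_axioms.intro)
    show "\<And>t v. t < T \<Longrightarrow> v \<noteq> 0 \<Longrightarrow> v \<bullet> (secmom M P t *v v) > 0" using A(14) by blast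
  qed
  have ax3: "mv3_axioms M P T s \<theta>"
  proof (rule mv3_axioms.intro)
    show "T \<ge> 1" using A(9) .
    show "\<And>t. t < T \<Longrightarrow> s t > 1" using A(10) by blast
    show "\<And>t. t < T \<Longrightarrow> 0 < Bcoef M P t \<and> Bcoef M P t < 1" using A(15) unfolding B_def by blast
    show "\<forall>t\<in>{1..T}. \<theta> t \<ge> 0" using A(16) .
    show "\<theta> T > 0" using A(17) .
  qed
  interpret mv3 M P T s lam \<theta> x0
    by (intro mv3.intro mv2.intro mv.intro A(8) ax1 ax2 ax3)
  have adm: "admissible M P T v \<longleftrightarrow> good v T" for v
    unfolding admissible_def good_def by auto
  show ?thesis
    unfolding B_def K_def p_def q_def xb_def ustar_def x_def
  proof (intro conjI allI ballI impI)
    fix t :: nat assume "t \<in> {1..T}"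
    then show "pcoef T \<theta> s (Bcoef M P) t > 0" using pp_pos by simp
  next
    fix t :: nat assume "t \<le> T"
    show "ustar_xbar M P x0 s lam \<theta> T t = x0 * (\<Prod>k<t. s k)
          + (\<Sum>j<t. qcoef T lam s (Suc j) / (2 * pcoef T \<theta> s (Bcoef M P) (Suc j))
             * (Bcoef M P j / (1 - Bcoef M P j)) * (\<Prod>l\<in>{Suc j..<t}. s l))"
      unfolding ustar_xbar_def by (rule xbar_formula)
  next
    show "admissible M P T (ustar_strategy M P x0 s lam \<theta> T)" unfolding adm by (rule us_good) simp
  next
    fix v assume "admissible M P T v"
    then show "objective M x0 s P lam \<theta> T v \<le> objective M x0 s P lam \<theta> T (ustar_strategy M P x0 s lam \<theta> T)"
      unfolding adm obj_us using obj_le by blast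
  next
    fix t :: nat assume "t \<le> T"
    then show "integral\<^sup>L M (wealth x0 s P (ustar_strategy M P x0 s lam \<theta> T) t) = ustar_xbar M P x0 s lam \<theta> T t"
      by (rule us_mean)
  next
    fix t :: nat and \<omega> assume t: "t < T" and "\<omega> \<in> space M"
    have m: "integral\<^sup>L M (xs t) = ustar_xbar M P x0 s lam \<theta> T t" using us_mean t by simp
    show "ustar_strategy M P x0 s lam \<theta> T t \<omega> - integral\<^sup>L M (ustar_strategy M P x0 s lam \<theta> T t)
       = (- (s t * (wealth x0 s P (ustar_strategy M P x0 s lam \<theta> T) t \<omega>
            - integral\<^sup>L M (wealth x0 s P (ustar_strategy M P x0 s lam \<theta> T) t)))) *\<^sub>R Kvec M P t"
      unfolding us_eq[of t \<omega>] us_amean[OF t] m by (simp add: scaleR_left_diff_distrib[symmetric])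
  next
    fix t :: nat assume t: "t < T"
    show "integral\<^sup>L M (ustar_strategy M P x0 s lam \<theta> T t)
       = (qcoef T lam s (Suc t) / (2 * pcoef T \<theta> s (Bcoef M P) (Suc t)) / (1 - Bcoef M P t)) *\<^sub>R Kvec M P t"
      by (rule us_amean[OF t])
  qed
qed


end
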